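(* Let $\theta\in(0,\pi)$. Then for all $x,y\in S_\theta$, $$\frac{p_{S_\theta}(x,y)}{\sqrt2\cos(\theta/4)}\le s_{S_\theta}(x,y),$$ and the constant is sharp.
   Context: $S_\theta=\{x\in\mathbb{C}:0<\arg(x)<\theta\}$. For a domain $G\subsetneq\mathbb{C}$, $d_G(x)=\inf\{|x-z|:z\in\partial G\}$, $s_G(x,y)=\frac{|x-y|}{\inf_{z\in\partial G}(|x-z|+|z-y|)}$, $p_G(x,y)=\frac{|x-y|}{\sqrt{|x-y|^2+4d_G(x)d_G(y)}}$. *)

theory Defs
  imports "HOL-Complex_Analysis.Complex_Analysis"
begin

definition sector :: "real \<Rightarrow> complex set" where
  "sector \<theta> = {x. 0 < Arg x \<and> Arg x < \<theta>}"

definition dG :: "complex set \<Rightarrow> complex \<Rightarrow> real" where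
  "dG G x = infdist x (frontier G)"

definition sG :: "complex set \<Rightarrow> complex \<Rightarrow> complex \<Rightarrow> real" where
  "sG G x y = cmod (x - y) / (INF z\<in>frontier G. cmod (x - z) + cmod (z - y))"

definition pG :: "complex set \<Rightarrow> complex \<Rightarrow> complex \<Rightarrow> real" where
  "pG G x y = cmod (x - y) / sqrt ((cmod (x - y))\<^sup>2 + 4 * dG G x * dG G y)"

end

theory Submission
  imports Defs
begin


definition H2 :: "real \<Rightarrow> complex \<Rightarrow> real" where
  "H2 \<theta> z = Re z * sin \<theta> - Im z * cos \<theta>"

lemma sector_iff:
  assumes "0 < \<theta>" "\<theta> < pi"
  shows "x \<in> sector \<theta> \<longleftrightarrow> Im x > 0 \<and> H2 \<theta> x > 0"
proof -
  have polar: "Re x = cmod x * cos (Arg x)" "Im x = cmod x * sin (Arg x)" if "x \<noteq> 0"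
    using that by (simp_all add: cos_Arg sin_Arg)
  have h2: "H2 \<theta> x = cmod x * sin (\<theta> - Arg x)" if "x \<noteq> 0"
  proof -
    have "H2 \<theta> x = (cmod x * cos (Arg x)) * sin \<theta> - (cmod x * sin (Arg x)) * cos \<theta>"
      unfolding H2_def using polar[OF that] by metis
    also have "\<dots> = cmod x * (sin \<theta> * cos (Arg x) - cos \<theta> * sin (Arg x))" by (simp only: algebra_simps)
    also have "\<dots> = cmod x * sin (\<theta> - Arg x)" by (simp only: sin_diff)
    finally show ?thesis .
  qed
  show ?thesis
  proof
    assume "x \<in> sector \<theta>"
    then have a: "0 < Arg x" "Arg x < \<theta>" unfolding sector_def by simp_all
    then have "Im x > 0" using Arg_lt_pi[of x] assms(2) by linarith
    then have "x \<noteq> 0" by auto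
    moreover have "sin (\<theta> - Arg x) > 0" using a assms by (intro sin_gt_zero) linarith+
    ultimately show "Im x > 0 \<and> H2 \<theta> x > 0" using \<open>Im x > 0\<close> h2 by simp
  next
    assume h: "Im x > 0 \<and> H2 \<theta> x > 0"
    then have a: "0 < Arg x" "Arg x < pi" using Arg_lt_pi[of x] by simp_all
    have "x \<noteq> 0" using h by auto
    then have "sin (\<theta> - Arg x) > 0" using h h2 by (simp add: zero_less_mult_iff)
    moreover have "Arg x < \<theta>"
    proof (rule ccontr)
      assume "\<not> Arg x < \<theta>"
      then have "sin (Arg x - \<theta>) \<ge> 0" using a assms by (intro sin_ge_zero) linarith+
      then have "sin (\<theta> - Arg x) \<le> 0" using sin_minus[of "Arg x - \<theta>"] by simp
      with \<open>sin (\<theta> - Arg x) > 0\<close> show False by simp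
    qed
    ultimately show "x \<in> sector \<theta>" using a unfolding sector_def by simp
  qed
qed

lemma sector_eq:
  assumes "0 < \<theta>" "\<theta> < pi"
  shows "sector \<theta> = {x. 0 < Im x \<and> 0 < H2 \<theta> x}"
  using sector_iff[OF assms] by auto

lemma open_sector:
  assumes "0 < \<theta>" "\<theta> < pi"
  shows "open (sector \<theta>)"
  unfolding sector_eq[OF assms] H2_def
  by (intro open_Collect_conj open_Collect_less continuous_intros)

lemma frontier_out:
  assumes "0 < \<theta>" "\<theta> < pi" "z \<in> frontier (sector \<theta>)"
  shows "Im z \<le> 0 \<or> H2 \<theta> z \<le> 0"
proof -
  have "z \<in> closure (sector \<theta>) - interior (sector \<theta>)" using assms(3) by (simp only: frontier_def)
  then have "z \<notin> interior (sector \<theta>)" by blast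
  moreover have eq: "interior (sector \<theta>) = sector \<theta>" by (rule interior_open[OF open_sector[OF assms(1,2)]])
  ultimately have "z \<notin> sector \<theta>" by metis
  then show ?thesis using sector_iff[OF assms(1,2), of z] by linarith
qed

lemma sq_ident:
  fixes p q u v :: real
  shows "(p * u - q * v)^2 + (p * v + q * u)^2 = (p^2 + q^2) * (u^2 + v^2)"
  by (simp add: power2_eq_square algebra_simps)

lemma H2_lip: "\<bar>H2 \<theta> x - H2 \<theta> y\<bar> \<le> cmod (x - y)"
proof -
  have e: "H2 \<theta> x - H2 \<theta> y = Re (x - y) * sin \<theta> - Im (x - y) * cos \<theta>" by (simp add: H2_def algebra_simps)
  have "(Re (x - y) * sin \<theta> - Im (x - y) * cos \<theta>)^2 \<le> (Re (x-y))^2 + (Im (x-y))^2"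
  proof -
    define a where "a = Re (x - y)"
    define b where "b = Im (x - y)"
    have 1: "(a * sin \<theta> - b * cos \<theta>)^2 + (a * cos \<theta> + b * sin \<theta>)^2 = a^2 + b^2"
      using sq_ident[of a "sin \<theta>" b "cos \<theta>"] by simp
    have 2: "0 \<le> (a * cos \<theta> + b * sin \<theta>)^2" by simp
    from 1 2 have "(a * sin \<theta> - b * cos \<theta>)^2 \<le> a^2 + b^2" by linarith
    then show ?thesis by (simp only: a_def b_def)
  qed
  then have "(H2 \<theta> x - H2 \<theta> y)^2 \<le> (cmod (x - y))^2" using e by (simp add: cmod_power2)
  then show ?thesis using abs_le_square_iff[of "H2 \<theta> x - H2 \<theta> y" "cmod (x-y)"] by simp
qed

lemma Im_lip: "\<bar>Im x - Im y\<bar> \<le> cmod (x - y)"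
  by (metis abs_Im_le_cmod minus_complex.simps(2))

lemma in_frontier:
  assumes "0 < \<theta>" "\<theta> < pi" "Im z = 0 \<or> H2 \<theta> z = 0" "Im z \<ge> 0" "H2 \<theta> z \<ge> 0"
  shows "z \<in> frontier (sector \<theta>)"
proof -
  have ns: "z \<notin> sector \<theta>" using assms(3) sector_iff[OF assms(1,2), of z] by linarith
  have sh: "sin (\<theta>/2) > 0" using assms by (intro sin_gt_zero) auto
  have H2c: "H2 \<theta> (cis (\<theta>/2)) = sin (\<theta>/2)"
  proof -
    have "sin (\<theta> - \<theta>/2) = sin \<theta> * cos (\<theta>/2) - cos \<theta> * sin (\<theta>/2)" by (rule sin_diff)
    moreover have "\<theta> - \<theta>/2 = \<theta>/2" by simp
    ultimately show ?thesis by (simp add: H2_def mult.commute)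
  qed
  have "z \<in> closure (sector \<theta>)"
    unfolding closure_approachable
  proof (intro allI impI)
    fix e :: real assume e: "e > 0"
    let ?y = "z + of_real (e/2) * cis (\<theta>/2)"
    have "Im ?y > 0" using assms(4) e sh by (simp add: add_nonneg_pos)
    moreover have "H2 \<theta> ?y = H2 \<theta> z + (e/2) * sin (\<theta>/2)"
      using H2c by (simp add: H2_def algebra_simps)
    then have "H2 \<theta> ?y > 0" using assms(5) e sh by (simp add: add_nonneg_pos)
    ultimately have "?y \<in> sector \<theta>" using sector_iff[OF assms(1,2), of ?y] by blast
    moreover have "dist ?y z < e" using e by (simp add: dist_norm norm_mult)
    ultimately show "\<exists>y\<in>sector \<theta>. dist y z < e" by blast
  qed
  moreover have eq: "interior (sector \<theta>) = sector \<theta>" by (rule interior_open[OF open_sector[OF assms(1,2)]])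
  moreover have "z \<notin> interior (sector \<theta>)" using ns eq by metis
  ultimately show ?thesis unfolding frontier_def by blast
qed

lemma ray1_frontier:
  assumes "0 < \<theta>" "\<theta> < pi" "t \<ge> 0"
  shows "complex_of_real t \<in> frontier (sector \<theta>)"
proof -
  have "sin \<theta> > 0" using assms by (intro sin_gt_zero) auto
  then have "H2 \<theta> (complex_of_real t) \<ge> 0" using assms(3) by (simp add: H2_def)
  then show ?thesis using in_frontier[OF assms(1,2)] by simp
qed

lemma ray2_frontier:
  assumes "0 < \<theta>" "\<theta> < pi" "t \<ge> 0"
  shows "complex_of_real t * cis \<theta> \<in> frontier (sector \<theta>)"
proof -
  have "sin \<theta> > 0" using assms by (intro sin_gt_zero) auto
  then have "Im (complex_of_real t * cis \<theta>) \<ge> 0" using assms(3) by simp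
  moreover have "H2 \<theta> (complex_of_real t * cis \<theta>) = 0" by (simp add: H2_def)
  ultimately show ?thesis using in_frontier[OF assms(1,2)] by simp
qed

lemma dG_lower:
  assumes "0 < \<theta>" "\<theta> < pi" "x \<in> sector \<theta>"
  shows "min (Im x) (H2 \<theta> x) \<le> dG (sector \<theta>) x"
proof -
  have ne: "frontier (sector \<theta>) \<noteq> {}" using ray1_frontier[OF assms(1,2), of 0] by auto
  have "min (Im x) (H2 \<theta> x) \<le> dist x z" if z: "z \<in> frontier (sector \<theta>)" for z
  proof -
    have xs: "Im x > 0" "H2 \<theta> x > 0" using assms(3) sector_iff[OF assms(1,2), of x] by blast+
    from frontier_out[OF assms(1,2) z] show ?thesis
      using Im_lip[of x z] H2_lip[of \<theta> x z] by (auto simp: dist_norm)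
  qed
  then have "min (Im x) (H2 \<theta> x) \<le> (INF a\<in>frontier (sector \<theta>). dist x a)"
    using ne by (intro cINF_greatest) auto
  moreover have "dG (sector \<theta>) x = (INF a\<in>frontier (sector \<theta>). dist x a)"
    using ne unfolding dG_def infdist_def by (simp only: if_False)
  ultimately show ?thesis by simp
qed



lemma ray1_witness:
  assumes "Im x > 0" "Im y > 0" "Im (x*y) \<ge> 0"
  defines "t \<equiv> Im (x*y) / (Im x + Im y)"
  shows "t \<ge> 0" "cmod (x - of_real t) + cmod (of_real t - y) = cmod (x - cnj y)"
    "(cmod (x - cnj y))^2 = (cmod (x - y))^2 + 4 * Im x * Im y"
proof -
  show "t \<ge> 0" using assms by (simp add: t_def)
  define k where "k = Im x / Im y"
  have k: "k > 0" using assms by (simp add: k_def)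
  have tt: "t * (Im x + Im y) = Re x * Im y + Im x * Re y" using assms by (simp add: t_def)
  have eq1: "x - of_real t = of_real k * (of_real t - cnj y)"
  proof (rule complex_eqI)
    have ky: "k * Im y = Im x" using assms(2) by (simp add: k_def)
    have "Im y * (k * (t - Re y)) = Im x * (t - Re y)" using ky by (metis mult.assoc mult.commute)
    moreover have "Im y * (Re x - t) = Im x * (t - Re y)" using tt by (simp add: algebra_simps)
    ultimately have "Im y * (Re x - t) = Im y * (k * (t - Re y))" by (metis (no_types))
    then have "Re x - t = k * (t - Re y)" using assms(2) by simp
    then show "Re (x - of_real t) = Re (of_real k * (of_real t - cnj y))" by simp
    show "Im (x - of_real t) = Im (of_real k * (of_real t - cnj y))"
      using assms by (simp add: k_def)
  qed
  have c1: "cmod (of_real t - y) = cmod (of_real t - cnj y)"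
    by (metis complex_cnj_complex_of_real complex_cnj_diff complex_mod_cnj)
  have eq2: "x - cnj y = of_real (1 + k) * (of_real t - cnj y)"
    using eq1 by (simp add: algebra_simps)
  have "cmod (x - of_real t) + cmod (of_real t - y) = k * cmod (of_real t - cnj y) + cmod (of_real t - cnj y)"
    using eq1 c1 k by (simp add: norm_mult)
  also have "\<dots> = (1 + k) * cmod (of_real t - cnj y)" by (simp add: algebra_simps)
  also have "\<dots> = cmod (x - cnj y)"
  proof -
    have "cmod (x - cnj y) = \<bar>1 + k\<bar> * cmod (of_real t - cnj y)"
      by (subst eq2) (simp only: norm_mult norm_of_real)
    then show ?thesis using k by simp
  qed
  finally show "cmod (x - of_real t) + cmod (of_real t - y) = cmod (x - cnj y)" .
  show "(cmod (x - cnj y))^2 = (cmod (x - y))^2 + 4 * Im x * Im y"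
    unfolding cmod_power2 by (simp add: power2_eq_square algebra_simps)
qed

definition phi :: "real \<Rightarrow> complex \<Rightarrow> complex" where
  "phi \<theta> z = cnj z * cis \<theta>"

lemma phi_phi: "phi \<theta> (phi \<theta> z) = z"
proof -
  have "cnj (cis \<theta>) * cis \<theta> = 1" by (simp add: cis_cnj cis_mult)
  then show ?thesis unfolding phi_def by (simp add: mult.assoc cis_mult)
qed

lemma phi_dist: "cmod (phi \<theta> a - phi \<theta> b) = cmod (a - b)"
proof -
  have "phi \<theta> a - phi \<theta> b = cnj (a - b) * cis \<theta>" by (simp only: phi_def complex_cnj_diff left_diff_distrib)
  then show ?thesis by (simp only: norm_mult complex_mod_cnj norm_cis mult_1_right)
qed

lemma Im_phi: "Im (phi \<theta> z) = H2 \<theta> z"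
  by (simp add: phi_def H2_def algebra_simps)

lemma H2_phi: "H2 \<theta> (phi \<theta> z) = Im z"
proof -
  have e: "cos \<theta> * cos \<theta> + sin \<theta> * sin \<theta> = 1"
    using sin_cos_squared_add[of \<theta>] by (simp add: power2_eq_square)
  have "H2 \<theta> (phi \<theta> z) = Im z * (cos \<theta> * cos \<theta>) + Im z * (sin \<theta> * sin \<theta>)"
    by (simp add: phi_def H2_def algebra_simps)
  also have "\<dots> = Im z" using e by (metis distrib_left mult_1_right)
  finally show ?thesis .
qed

lemma phi_real: "phi \<theta> (of_real t) = of_real t * cis \<theta>"
  by (simp add: phi_def)

lemma key_real1:
  fixes a b c e C :: real
  assumes "a > 0" "b > 0" "c > 0" "e > 0" "a * c \<le> b * e" "C \<ge> -1"
  shows "b * c + a * e + 2 * C * a * c \<ge> 0"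
proof -
  have "(b * c + a * e)^2 = (b * c - a * e)^2 + 4 * (a * c) * (b * e)"
    by (simp add: power2_eq_square algebra_simps)
  then have "(b * c + a * e)^2 \<ge> 4 * (a * c) * (b * e)"
    using zero_le_power2[of "b * c - a * e"] by linarith
  moreover have "4 * (a*c) * (a*c) \<le> 4 * (a*c) * (b*e)" using assms by (intro mult_left_mono) auto
  ultimately have "(b * c + a * e)^2 \<ge> (2 * (a * c))^2" by (simp add: power2_eq_square)
  moreover have "0 \<le> b * c + a * e" using assms by simp
  ultimately have "b * c + a * e \<ge> 2 * (a * c)" by (rule power2_le_imp_le)
  moreover have "(-1) * (2 * a * c) \<le> C * (2 * a * c)" using assms by (intro mult_right_mono) auto
  then have "2 * C * a * c \<ge> -2 * a * c" by (simp add: algebra_simps)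
  ultimately show ?thesis by linarith
qed

lemma F1:
  assumes "sin \<theta> > 0" "Im x > 0" "Im y > 0" "H2 \<theta> x > 0" "H2 \<theta> y > 0"
    "Im x * Im y \<le> H2 \<theta> x * H2 \<theta> y"
  shows "Im (x * y) \<ge> 0"
proof -
  have "sin \<theta> * Im (x * y) = H2 \<theta> x * Im y + Im x * H2 \<theta> y + 2 * cos \<theta> * Im x * Im y"
    by (simp add: H2_def algebra_simps)
  moreover have "H2 \<theta> x * Im y + Im x * H2 \<theta> y + 2 * cos \<theta> * Im x * Im y \<ge> 0"
    using key_real1[of "Im x" "H2 \<theta> x" "Im y" "H2 \<theta> y" "cos \<theta>"] assms by simp
  ultimately have "sin \<theta> * Im (x * y) \<ge> 0" by linarith
  then show ?thesis using mult_le_cancel_left_pos[OF assms(1), of 0 "Im (x*y)"] by simp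
qed

lemma key_real2:
  fixes A B C E p1 p2 D ch :: real
  assumes "A > 0" "E > 0" "p1 \<ge> 0" "p2 \<ge> 0" "ch > 0"
    "B = A + 2 * ch * p1" "C = E + 2 * ch * p2" "D \<ge> (p1 + p2)^2"
  shows "D + 4 * min (A * C) (B * E) \<le> (1 + ch) * (D + 4 * (A * E))"
proof -
  define m where "m = min (A * p2) (E * p1)"
  have m0: "m \<ge> 0" using assms by (simp add: m_def)
  have mineq: "min (A * C) (B * E) = A * E + 2 * ch * m"
    using assms by (simp add: m_def min_def algebra_simps mult_left_mono)
  have mm: "m * m \<le> (A * p2) * (E * p1)"
  proof -
    have "m \<le> A * p2" "m \<le> E * p1" by (simp_all add: m_def)
    then show ?thesis using m0 by (intro mult_mono) auto
  qed
  have "(2*m)^2 \<le> (A * E + p1 * p2)^2"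
  proof -
    have "(A * E + p1 * p2)^2 = (A * E - p1 * p2)^2 + 4 * ((A * p2) * (E * p1))"
      by (simp add: power2_eq_square algebra_simps)
    moreover have "(2*m)^2 = 4 * (m * m)" by (simp add: power2_eq_square)
    ultimately show ?thesis using \<open>m * m \<le> (A * p2) * (E * p1)\<close> zero_le_power2[of "A * E - p1 * p2"] by linarith
  qed
  moreover have "0 \<le> A * E + p1 * p2" using assms by (simp add: add_nonneg_nonneg)
  ultimately have "2*m \<le> A * E + p1 * p2" by (rule power2_le_imp_le)
  moreover have "4 * p1 * p2 \<le> D"
  proof -
    have "(p1 + p2)^2 = (p1 - p2)^2 + 4 * p1 * p2" by (simp add: power2_eq_square algebra_simps)
    then show ?thesis using assms(8) zero_le_power2[of "p1 - p2"] by linarith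
  qed
  ultimately have "8 * m \<le> D + 4 * (A * E)" by linarith
  then have "ch * (8 * m) \<le> ch * (D + 4 * (A * E))" using assms(5) by (intro mult_left_mono) auto
  moreover have "(1 + ch) * (D + 4 * (A * E)) = (D + 4 * (A * E)) + ch * (D + 4 * (A * E))"
    by (simp add: algebra_simps)
  moreover have "ch * (8 * m) = 8 * (ch * m)" by simp
  moreover have "4 * (A * E + 2 * ch * m) = 4 * (A * E) + 8 * (ch * m)" by (simp add: algebra_simps)
  ultimately show ?thesis using mineq by linarith
qed



lemma H2_half:
  "H2 \<theta> z - Im z = 2 * cos (\<theta>/2) * H2 (\<theta>/2) z"
proof -
  have s: "sin \<theta> = 2 * sin (\<theta>/2) * cos (\<theta>/2)" using sin_double[of "\<theta>/2"] by simp
  have c: "cos \<theta> = 2 * (cos (\<theta>/2))^2 - 1"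
  proof -
    have a: "(sin (\<theta>/2))^2 + (cos (\<theta>/2))^2 = 1" by (rule sin_cos_squared_add)
    have b: "cos \<theta> = (cos (\<theta>/2))^2 - (sin (\<theta>/2))^2" using cos_double[of "\<theta>/2"] by simp
    from a b show ?thesis by linarith
  qed
  show ?thesis unfolding H2_def s c by (simp add: algebra_simps power2_eq_square)
qed

lemma case_mixed:
  assumes ch: "cos (\<theta>/2) > 0"
    and pos: "Im x > 0" "Im y > 0" "H2 \<theta> x > 0" "H2 \<theta> y > 0"
    and c1: "Im x \<le> H2 \<theta> x" and c2: "H2 \<theta> y \<le> Im y"
  shows "(cmod (x - y))^2 + 4 * min (Im x * Im y) (H2 \<theta> x * H2 \<theta> y)
      \<le> (1 + cos (\<theta>/2)) * ((cmod (x - y))^2 + 4 * (Im x * H2 \<theta> y))"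
proof -
  define p1 where "p1 = H2 (\<theta>/2) x"
  define p2 where "p2 = - H2 (\<theta>/2) y"
  have B: "H2 \<theta> x = Im x + 2 * cos (\<theta>/2) * p1" using H2_half[of \<theta> x] by (simp add: p1_def)
  have C: "Im y = H2 \<theta> y + 2 * cos (\<theta>/2) * p2" using H2_half[of \<theta> y] by (simp add: p2_def)
  have "0 \<le> 2 * cos (\<theta>/2) * p1" using B c1 by linarith
  then have p1: "p1 \<ge> 0" using ch by (simp add: zero_le_mult_iff)
  have "0 \<le> 2 * cos (\<theta>/2) * p2" using C c2 by linarith
  then have p2: "p2 \<ge> 0" using ch by (simp add: zero_le_mult_iff)
  have "p1 + p2 \<le> cmod (x - y)" using H2_lip[of "\<theta>/2" x y] by (simp add: p1_def p2_def)
  then have D: "(p1 + p2)^2 \<le> (cmod (x - y))^2" using p1 p2 by (intro power_mono) auto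
  show ?thesis
    using key_real2[OF pos(1) pos(4) p1 p2 ch B C D] by simp
qed

lemma main_ineq:
  assumes ch: "cos (\<theta>/2) > 0"
    and pos: "Im x > 0" "Im y > 0" "H2 \<theta> x > 0" "H2 \<theta> y > 0"
  shows "(cmod (x - y))^2 + 4 * min (Im x * Im y) (H2 \<theta> x * H2 \<theta> y)
      \<le> (1 + cos (\<theta>/2)) * ((cmod (x - y))^2 + 4 * (min (Im x) (H2 \<theta> x) * min (Im y) (H2 \<theta> y)))"
proof -
  define D where "D = (cmod (x - y))^2"
  have D0: "D \<ge> 0" by (simp add: D_def)
  have gen: "D + 4 * min P Q \<le> (1 + cos (\<theta>/2)) * (D + 4 * R)" if "min P Q \<le> R" "R \<ge> 0" for P Q R
  proof -
    have "0 \<le> cos (\<theta>/2) * (D + 4 * R)" using ch D0 that by simp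
    then show ?thesis using that by (simp add: algebra_simps)
  qed
  consider "Im x \<le> H2 \<theta> x" "Im y \<le> H2 \<theta> y" | "H2 \<theta> x \<le> Im x" "H2 \<theta> y \<le> Im y"
    | "Im x \<le> H2 \<theta> x" "H2 \<theta> y \<le> Im y" | "H2 \<theta> x \<le> Im x" "Im y \<le> H2 \<theta> y" by linarith
  then show ?thesis
  proof cases
    case 1
    then show ?thesis unfolding D_def[symmetric] using pos by (intro gen) auto
  next
    case 2
    then show ?thesis unfolding D_def[symmetric] using pos by (intro gen) auto
  next
    case 3
    then show ?thesis using case_mixed[OF ch pos 3] by simp
  next
    case 4
    have "(cmod (y - x))^2 + 4 * min (Im y * Im x) (H2 \<theta> y * H2 \<theta> x)
      \<le> (1 + cos (\<theta>/2)) * ((cmod (y - x))^2 + 4 * (Im y * H2 \<theta> x))"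
      using case_mixed[OF ch pos(2) pos(1) pos(4) pos(3) 4(2) 4(1)] .
    moreover have "cmod (y - x) = cmod (x - y)" by (rule norm_minus_commute)
    ultimately show ?thesis using 4 by (simp add: mult.commute)
  qed
qed

lemma witness:
  assumes th: "0 < \<theta>" "\<theta> < pi"
    and pos: "Im x > 0" "Im y > 0" "H2 \<theta> x > 0" "H2 \<theta> y > 0"
  shows "\<exists>z\<in>frontier (sector \<theta>). (cmod (x - z) + cmod (z - y))^2
           \<le> (cmod (x - y))^2 + 4 * min (Im x * Im y) (H2 \<theta> x * H2 \<theta> y)"
proof -
  have s: "sin \<theta> > 0" using th by (intro sin_gt_zero) auto
  show ?thesis
  proof (cases "Im x * Im y \<le> H2 \<theta> x * H2 \<theta> y")
    case True
    have i: "Im (x * y) \<ge> 0" using F1[OF s pos True] .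
    define t where "t = Im (x*y) / (Im x + Im y)"
    note w = ray1_witness[OF pos(1,2) i, folded t_def]
    have "complex_of_real t \<in> frontier (sector \<theta>)" using ray1_frontier[OF th w(1)] .
    moreover have "(cmod (x - of_real t) + cmod (of_real t - y))^2
           = (cmod (x - y))^2 + 4 * min (Im x * Im y) (H2 \<theta> x * H2 \<theta> y)"
      using w(2,3) True by (simp add: min_def)
    ultimately show ?thesis by (intro bexI[of _ "of_real t"]) auto
  next
    case False
    define x' where "x' = phi \<theta> x"
    define y' where "y' = phi \<theta> y"
    have p': "Im x' > 0" "Im y' > 0" "H2 \<theta> x' > 0" "H2 \<theta> y' > 0"
      using pos by (simp_all add: x'_def y'_def Im_phi H2_phi)
    have "Im x' * Im y' \<le> H2 \<theta> x' * H2 \<theta> y'" using False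
      by (simp add: x'_def y'_def Im_phi H2_phi)
    then have i: "Im (x' * y') \<ge> 0" using F1[OF s p'] by blast
    define t where "t = Im (x'*y') / (Im x' + Im y')"
    note w = ray1_witness[OF p'(1,2) i, folded t_def]
    have "phi \<theta> (of_real t) \<in> frontier (sector \<theta>)"
      using ray2_frontier[OF th w(1)] by (simp add: phi_real)
    moreover have "cmod (x - phi \<theta> (of_real t)) = cmod (x' - of_real t)"
      using phi_dist[of \<theta> x' "of_real t"] by (simp add: x'_def phi_phi)
    moreover have "cmod (phi \<theta> (of_real t) - y) = cmod (of_real t - y')"
      using phi_dist[of \<theta> "of_real t" y'] by (simp add: y'_def phi_phi)
    moreover have "cmod (x' - y') = cmod (x - y)" by (simp add: x'_def y'_def phi_dist)
    moreover have "Im x' * Im y' = H2 \<theta> x * H2 \<theta> y" by (simp add: x'_def y'_def Im_phi)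
    ultimately show ?thesis using w(2,3) False
      by (intro bexI[of _ "phi \<theta> (of_real t)"]) (auto simp: min_def)
  qed
qed



lemma refl_sq: "(cmod (a - cnj b))^2 = (cmod (a - b))^2 + 4 * Im a * Im b"
  unfolding cmod_power2 by (simp add: power2_eq_square algebra_simps)

lemma refl_lower:
  assumes "Im w \<le> 0" "Im b > 0"
  shows "cmod (a - cnj b) \<le> cmod (a - w) + cmod (w - b)"
proof -
  have "(cmod (w - cnj b))^2 \<le> (cmod (w - b))^2"
  proof -
    have "(cmod (w - b))^2 = (cmod (w - cnj b))^2 - 4 * Im w * Im b"
      using refl_sq[of w b] by simp
    moreover have "Im w * Im b \<le> 0" using assms by (simp add: mult_nonpos_nonneg)
    ultimately show ?thesis by linarith
  qed
  then have "cmod (w - cnj b) \<le> cmod (w - b)" by (simp add: power2_le_iff_abs_le)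
  moreover have "cmod (a - cnj b) \<le> cmod (a - w) + cmod (w - cnj b)"
    using norm_triangle_ineq[of "a - w" "w - cnj b"] by simp
  ultimately show ?thesis by linarith
qed

lemma K_facts:
  assumes "0 < \<theta>" "\<theta> < pi"
  shows "cos (\<theta>/4) > 0" "(sqrt 2 * cos (\<theta>/4))^2 = 1 + cos (\<theta>/2)" "sqrt 2 * cos (\<theta>/4) > 0"
proof -
  show c: "cos (\<theta>/4) > 0" using assms by (intro cos_gt_zero_pi) auto
  have a: "(sin (\<theta>/4))^2 + (cos (\<theta>/4))^2 = 1" by (rule sin_cos_squared_add)
  have b: "cos (\<theta>/2) = (cos (\<theta>/4))^2 - (sin (\<theta>/4))^2" using cos_double[of "\<theta>/4"] by simp
  have "(sqrt 2 * cos (\<theta>/4))^2 = 2 * (cos (\<theta>/4))^2" by (simp add: power_mult_distrib)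
  then show "(sqrt 2 * cos (\<theta>/4))^2 = 1 + cos (\<theta>/2)" using a b by linarith
  show "sqrt 2 * cos (\<theta>/4) > 0" using c by simp
qed

lemma part_one:
  assumes th: "0 < \<theta>" "\<theta> < pi" and xs: "x \<in> sector \<theta>" and ys: "y \<in> sector \<theta>"
  shows "pG (sector \<theta>) x y / (sqrt 2 * cos (\<theta> / 4)) \<le> sG (sector \<theta>) x y"
proof (cases "x = y")
  case True
  then show ?thesis by (simp add: pG_def sG_def)
next
  case False
  define K where "K = sqrt 2 * cos (\<theta> / 4)"
  have K0: "K > 0" and K2: "K^2 = 1 + cos (\<theta>/2)" using K_facts[OF th] by (simp_all add: K_def)
  have ch: "cos (\<theta>/2) > 0" using th by (intro cos_gt_zero_pi) auto
  have pos: "Im x > 0" "H2 \<theta> x > 0" "Im y > 0" "H2 \<theta> y > 0"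
    using xs ys sector_iff[OF th] by blast+
  define d where "d = cmod (x - y)"
  have d0: "d > 0" using False by (simp add: d_def)
  define F where "F = frontier (sector \<theta>)"
  define f where "f = (\<lambda>z. cmod (x - z) + cmod (z - y))"
  define m where "m = (INF z\<in>F. f z)"
  have sG: "sG (sector \<theta>) x y = d / m" by (simp add: sG_def d_def m_def F_def f_def)
  have ne: "F \<noteq> {}" using ray1_frontier[OF th, of 0] by (auto simp: F_def)
  have bdd: "bdd_below (f ` F)" by (rule bdd_belowI[of _ 0]) (auto simp: f_def)
  have dm: "d \<le> m" unfolding m_def
  proof (rule cINF_greatest[OF ne])
    fix z assume "z \<in> F"
    show "d \<le> f z" using norm_triangle_ineq[of "x - z" "z - y"] by (simp add: d_def f_def)
  qed
  obtain z0 where z0: "z0 \<in> F" and fz0: "(f z0)^2 \<le> d^2 + 4 * min (Im x * Im y) (H2 \<theta> x * H2 \<theta> y)"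
    using witness[OF th pos(1) pos(3) pos(2) pos(4)] by (auto simp: F_def f_def d_def)
  have mf: "m \<le> f z0" unfolding m_def by (rule cINF_lower[OF bdd z0])
  define dx where "dx = dG (sector \<theta>) x"
  define dy where "dy = dG (sector \<theta>) y"
  have dx: "min (Im x) (H2 \<theta> x) \<le> dx" using dG_lower[OF th xs] by (simp add: dx_def)
  have dy: "min (Im y) (H2 \<theta> y) \<le> dy" using dG_lower[OF th ys] by (simp add: dy_def)
  have mxy: "min (Im x) (H2 \<theta> x) * min (Im y) (H2 \<theta> y) \<le> dx * dy"
    using dx dy pos by (intro mult_mono) auto
  have dxy0: "0 \<le> dx * dy" using mxy pos by (smt (verit) mult_pos_pos)
  define Q where "Q = d^2 + 4 * (dx * dy)"
  have Q0: "Q > 0" using d0 dxy0 by (simp add: Q_def add_pos_nonneg)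
  have "m^2 \<le> (f z0)^2" using dm d0 mf by (intro power_mono) auto
  also have "\<dots> \<le> d^2 + 4 * min (Im x * Im y) (H2 \<theta> x * H2 \<theta> y)" by (rule fz0)
  also have "\<dots> \<le> (1 + cos (\<theta>/2)) * (d^2 + 4 * (min (Im x) (H2 \<theta> x) * min (Im y) (H2 \<theta> y)))"
    using main_ineq[OF ch pos(1) pos(3) pos(2) pos(4)] by (simp add: d_def)
  also have "\<dots> \<le> (1 + cos (\<theta>/2)) * Q"
    using mxy ch unfolding Q_def by (intro mult_left_mono) auto
  also have "\<dots> = K^2 * Q" using K2 by simp
  finally have "m \<le> sqrt (K^2 * Q)" by (rule real_le_rsqrt)
  also have "\<dots> = K * sqrt Q" using K0 by (simp add: real_sqrt_mult)
  finally have mK: "m \<le> sqrt Q * K" by (simp add: mult.commute)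
  have pG: "pG (sector \<theta>) x y / K = d / (sqrt Q * K)"
    by (simp add: pG_def Q_def d_def dx_def dy_def)
  have "d / (sqrt Q * K) \<le> d / m"
    using mK d0 dm Q0 K0 by (intro divide_left_mono) auto
  then show ?thesis using pG sG by (simp add: K_def)
qed



lemma part_two:
  assumes th: "0 < \<theta>" "\<theta> < pi" and c: "c > 1 / (sqrt 2 * cos (\<theta> / 4))"
  shows "\<exists>x\<in>sector \<theta>. \<exists>y\<in>sector \<theta>. c * pG (sector \<theta>) x y > sG (sector \<theta>) x y"
proof -
  define q where "q = \<theta>/4"
  have thq: "\<theta> = 4 * q" by (simp add: q_def)
  define s where "s = sin q"
  define co where "co = cos q"
  have s0: "s > 0" unfolding s_def q_def using th by (intro sin_gt_zero) auto
  have co0: "co > 0" unfolding co_def q_def using th by (intro cos_gt_zero_pi) auto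
  have sc: "s^2 + co^2 = 1" by (simp add: s_def co_def)
  define K where "K = sqrt 2 * co"
  have K0: "K > 0" using co0 by (simp add: K_def)
  define x where "x = cis q"
  define y where "y = cis (3 * q)"
  have phix: "phi \<theta> x = y"
  proof -
    have "phi \<theta> x = cis (- q) * cis \<theta>" by (simp add: phi_def x_def cis_cnj)
    also have "\<dots> = cis (\<theta> - q)" by (simp add: cis_mult)
    also have "\<theta> - q = 3 * q" using thq by simp
    finally show ?thesis by (simp add: y_def)
  qed
  have phiy: "phi \<theta> y = x" using phi_phi[of \<theta> x] phix by simp
  define S3 where "S3 = sin (3 * q)"
  have S3_0: "S3 > 0" unfolding S3_def q_def using th by (intro sin_gt_zero) auto
  have Imx: "Im x = s" by (simp add: x_def s_def)
  have H2x: "H2 \<theta> x = S3"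
  proof -
    have "H2 \<theta> x = sin (\<theta> - q)" by (simp add: H2_def x_def sin_diff algebra_simps)
    also have "\<theta> - q = 3 * q" using thq by simp
    finally show ?thesis by (simp add: S3_def)
  qed
  have Imy: "Im y = S3" using Im_phi[of \<theta> x] phix H2x by simp
  have H2y: "H2 \<theta> y = s" using H2_phi[of \<theta> x] phix Imx by simp
  have xs: "x \<in> sector \<theta>" using sector_iff[OF th, of x] Imx H2x s0 S3_0 by simp
  have ys: "y \<in> sector \<theta>" using sector_iff[OF th, of y] Imy H2y s0 S3_0 by simp
  have c2: "cos (2 * q) = 1 - 2 * s^2" using cos_double[of q] sc by (simp add: s_def co_def)
  have s2: "sin (2 * q) = 2 * s * co" using sin_double[of q] by (simp add: s_def co_def)
  have xy: "x - y = x * (1 - cis (2 * q))"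
  proof -
    have "x * cis (2 * q) = y" by (simp add: x_def y_def cis_mult)
    then show ?thesis by (simp add: algebra_simps)
  qed
  have "(cmod (1 - cis (2 * q)))^2 = (1 - cos (2*q))^2 + (sin (2*q))^2"
    by (simp add: cmod_power2)
  also have "\<dots> = 4 * s^2 * (s^2 + co^2)" unfolding c2 s2 by (simp add: power2_eq_square algebra_simps)
  also have "\<dots> = 4 * s^2" using sc by simp
  finally have D: "(cmod (x - y))^2 = 4 * s^2" using xy by (simp add: norm_mult x_def)
  have d: "cmod (x - y) = 2 * s"
  proof -
    have "cmod (x - y) = sqrt ((cmod (x - y))^2)" by simp
    also have "\<dots> = sqrt ((2 * s)^2)" using D by (simp add: power_mult_distrib)
    also have "\<dots> = \<bar>2 * s\<bar>" by (rule real_sqrt_abs)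
    also have "\<dots> = 2 * s" using s0 by simp
    finally show ?thesis .
  qed
  have S3e: "S3 = 2 * s * co^2 + (1 - 2 * s^2) * s"
  proof -
    have e: "3 * q = 2 * q + q" by simp
    have "S3 = sin (2*q) * co + cos (2*q) * s" unfolding S3_def e s_def co_def by (rule sin_add)
    then have "S3 = 2 * s * co * co + (1 - 2 * s^2) * s" by (simp only: c2 s2)
    then show ?thesis using c2 s2 by (simp add: power2_eq_square algebra_simps)
  qed
  define L where "L = 4 * s * co"
  have L0: "L > 0" using s0 co0 by (simp add: L_def)
  have L2: "L^2 = (cmod (x - y))^2 + 4 * Im x * Im y"
  proof -
    have "(cmod (x - y))^2 + 4 * Im x * Im y = 4 * s^2 + 4 * s * (2 * s * co^2 + (1 - 2 * s^2) * s)"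
      using D Imx Imy S3e by simp
    also have "\<dots> = 16 * s^2 * co^2 + 8 * s^2 * (1 - s^2 - co^2)" by (simp add: power2_eq_square algebra_simps)
    also have "\<dots> = 16 * s^2 * co^2" using sc by simp
    finally show ?thesis by (simp add: L_def power2_eq_square algebra_simps)
  qed
  have Lxy: "L = cmod (x - cnj y)"
  proof -
    have "L^2 = (cmod (x - cnj y))^2" using L2 refl_sq[of x y] by simp
    then show ?thesis using L0 by (simp add: power2_eq_iff_nonneg)
  qed
  have Lyx: "L = cmod (y - cnj x)"
  proof -
    have "(cmod (y - cnj x))^2 = (cmod (x - y))^2 + 4 * Im x * Im y"
      using refl_sq[of y x] norm_minus_commute[of y x] by (simp add: algebra_simps)
    then have "L^2 = (cmod (y - cnj x))^2" using L2 by simp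
    then show ?thesis using L0 by (simp add: power2_eq_iff_nonneg)
  qed
  define F where "F = frontier (sector \<theta>)"
  define f where "f = (\<lambda>z. cmod (x - z) + cmod (z - y))"
  define m where "m = (INF z\<in>F. f z)"
  have ne: "F \<noteq> {}" using ray1_frontier[OF th, of 0] by (auto simp: F_def)
  have Lm: "L \<le> m" unfolding m_def
  proof (rule cINF_greatest[OF ne])
    fix z assume z: "z \<in> F"
    from frontier_out[OF th z[unfolded F_def]] show "L \<le> f z"
    proof
      assume "Im z \<le> 0"
      then show ?thesis using refl_lower[of z y x] Imy S3_0 Lxy by (simp add: f_def)
    next
      assume h: "H2 \<theta> z \<le> 0"
      have "Im (phi \<theta> z) \<le> 0" using h by (simp add: Im_phi)
      then have "L \<le> cmod (y - phi \<theta> z) + cmod (phi \<theta> z - x)"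
        using refl_lower[of "phi \<theta> z" x y] Imx s0 Lyx by simp
      moreover have "cmod (y - phi \<theta> z) = cmod (x - z)" using phi_dist[of \<theta> x z] phix by simp
      moreover have "cmod (phi \<theta> z - x) = cmod (z - y)" using phi_dist[of \<theta> z y] phiy by simp
      ultimately show ?thesis by (simp add: f_def)
    qed
  qed
  have sG: "sG (sector \<theta>) x y = 2 * s / m" by (simp add: sG_def d m_def F_def f_def)
  have sGle: "sG (sector \<theta>) x y \<le> 1 / (2 * co)"
  proof -
    have "2 * s / m \<le> 2 * s / L" using Lm L0 s0 by (intro divide_left_mono) auto
    also have "\<dots> = 1 / (2 * co)" using s0 co0 by (simp add: L_def)
    finally show ?thesis using sG by simp
  qed
  have xco: "cmod (x - of_real co) = s"
  proof -
    have "x - of_real co = of_real s * \<i>" by (simp add: x_def co_def s_def complex_eq_iff)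
    then show ?thesis using s0 by (simp add: norm_mult)
  qed
  have dx: "dG (sector \<theta>) x \<le> s"
    unfolding dG_def using ray1_frontier[OF th, of co] co0 xco
    by (intro infdist_le2[of "of_real co"]) (auto simp: dist_norm)
  have dy: "dG (sector \<theta>) y \<le> s"
  proof -
    have "phi \<theta> (of_real co) \<in> frontier (sector \<theta>)"
      using ray2_frontier[OF th, of co] co0 by (simp add: phi_real)
    moreover have "cmod (y - phi \<theta> (of_real co)) = s"
      using phi_dist[of \<theta> x "of_real co"] phix xco by simp
    ultimately show ?thesis unfolding dG_def
      by (intro infdist_le2[of "phi \<theta> (of_real co)"]) (auto simp: dist_norm)
  qed
  have dxy: "dG (sector \<theta>) x * dG (sector \<theta>) y \<le> s * s"
    using dx dy by (intro mult_mono) (auto simp: dG_def infdist_nonneg s0 less_imp_le)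
  have dxy0: "0 \<le> dG (sector \<theta>) x * dG (sector \<theta>) y" by (simp add: dG_def infdist_nonneg)
  define Q where "Q = (cmod (x - y))^2 + 4 * (dG (sector \<theta>) x * dG (sector \<theta>) y)"
  have Q0: "Q > 0" using D s0 dxy0 unfolding Q_def by (simp add: add_pos_nonneg)
  have e8: "(2 * sqrt 2 * s)^2 = 8 * s^2" by (simp add: power_mult_distrib)
  have "s * s = s^2" by (simp add: power2_eq_square)
  then have Qle: "Q \<le> (2 * sqrt 2 * s)^2" using D dxy e8 unfolding Q_def by linarith
  have "sqrt Q \<le> 2 * sqrt 2 * s" using Qle s0 by (simp add: real_sqrt_le_iff real_le_lsqrt real_sqrt_le_mono)
  then have pG: "pG (sector \<theta>) x y \<ge> 1 / sqrt 2"
  proof -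
    assume sq: "sqrt Q \<le> 2 * sqrt 2 * s"
    have "pG (sector \<theta>) x y = 2 * s / sqrt Q" by (simp add: pG_def Q_def d dG_def)
    moreover have "2 * s / (2 * sqrt 2 * s) \<le> 2 * s / sqrt Q"
      using sq s0 Q0 by (intro divide_left_mono) auto
    moreover have "2 * s / (2 * sqrt 2 * s) = 1 / sqrt 2" using s0 by simp
    ultimately show ?thesis by simp
  qed
  have cpos: "c > 0" using c K_facts[OF th] by (smt (verit) divide_pos_pos)
  have "c * pG (sector \<theta>) x y \<ge> c / sqrt 2" using pG cpos by (simp add: mult_left_mono divide_inverse)
  moreover have "c / sqrt 2 > 1 / (2 * co)"
  proof -
    have "c > 1 / (sqrt 2 * co)" using c by (simp add: co_def q_def)
    then have "c / sqrt 2 > (1 / (sqrt 2 * co)) / sqrt 2" by (intro divide_strict_right_mono) auto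
    moreover have "(1 / (sqrt 2 * co)) / sqrt 2 = 1 / (2 * co)" by simp
    ultimately show ?thesis by metis
  qed
  ultimately have "c * pG (sector \<theta>) x y > sG (sector \<theta>) x y" using sGle by linarith
  then show ?thesis using xs ys by blast
qed


theorem theorem3p8:
  fixes \<theta> :: real
  assumes "0 < \<theta>" and "\<theta> < pi"
  shows "(\<forall>x\<in>sector \<theta>. \<forall>y\<in>sector \<theta>.
            pG (sector \<theta>) x y / (sqrt 2 * cos (\<theta> / 4)) \<le> sG (sector \<theta>) x y)
       \<and> (\<forall>c > 1 / (sqrt 2 * cos (\<theta> / 4)). \<exists>x\<in>sector \<theta>. \<exists>y\<in>sector \<theta>.
            c * pG (sector \<theta>) x y > sG (sector \<theta>) x y)"
  using part_one[OF assms] part_two[OF assms] by blast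

end
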